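(* Let $X\in\mathbb{R}^{N\times D}$ with rows $x_n^\top$ have SVD $X^\top=U\mathrm{diag}(\lambda)V^\top+\bar U\mathrm{diag}(\bar\lambda)\bar V^\top$ where $U\in\mathbb{R}^{D\times M}$ holds the top-$M$ right singular vectors, $[U,\bar U]$ is orthogonal, $\lambda_1$ is the largest singular value and $\bar\lambda_1$ the $(M+1)$-st largest singular value (zero if none). Let $\phi(y,a)$ be twice differentiable in $a$, let $p(\beta)$ be a twice differentiable prior, and consider the exact posterior $\log p(\beta\mid X,Y)=\log p(\beta)+\sum_n\phi(y_n,x_n^\top\beta)+\mathrm{const}$ and the approximate posterior $\log\tilde p(\beta\mid X,Y)=\log p(\beta)+\sum_n\phi(y_n,x_n^\top UU^\top\beta)+\mathrm{const}$, with maximizers $\bar\mu$ and $\hat\mu$ respectively. Assume $-\log p(\beta\mid X,Y)$ is $\alpha$-strongly convex ($\alpha>0$). Then there is $A\in\mathbb{R}^N$ with each $A_n$ lying between $x_n^\top UU^\top\hat\mu$ and $x_n^\top\hat\mu$ such that $$\|\hat\mu-\bar\mu\|_2\le\frac{\bar\lambda_1\big(\|\vec\phi'(Y,X\hat\mu)\|_2+\lambda_1\|\bar U^\top\hat\mu\|_2\,\|\vec\phi''(Y,A)\|_\infty\big)}{\alpha}.$$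
   Context: For $B\in\mathbb{R}^N$, $\vec\phi'(Y,B)$ and $\vec\phi''(Y,B)$ are the vectors with entries $\frac{\partial}{\partial a}\phi(y_n,a)|_{a=B_n}$ and $\frac{\partial^2}{\partial a^2}\phi(y_n,a)|_{a=B_n}$. *)

theory Defs
  imports "HOL-Analysis.Analysis"
begin

definition strongly_convex :: "real \<Rightarrow> ('a::real_normed_vector \<Rightarrow> real) \<Rightarrow> bool" where
  "strongly_convex \<alpha> F \<longleftrightarrow>
     (\<forall>x y. \<forall>t::real. 0 \<le> t \<longrightarrow> t \<le> 1 \<longrightarrow>
        F (t *\<^sub>R x + (1 - t) *\<^sub>R y)
          \<le> t * F x + (1 - t) * F y - \<alpha> / 2 * t * (1 - t) * (norm (x - y))\<^sup>2)"

text \<open>Singular value decomposition of the data matrix X (N rows x n, n < N, in R^D, D = CARD('d)):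
  X^T = sum over j < D of s_j w_j v_j^T, with (w_j) an orthonormal basis of R^D (the matrix [U, Ubar]),
  singular values s_j nonnegative and sorted decreasingly, and the left vectors v_j in R^N orthonormal
  (those belonging to nonzero singular values; the others do not contribute).\<close>
definition svd_decomp ::
  "nat \<Rightarrow> (nat \<Rightarrow> real^'d) \<Rightarrow> (nat \<Rightarrow> real) \<Rightarrow> (nat \<Rightarrow> real^'d) \<Rightarrow> (nat \<Rightarrow> nat \<Rightarrow> real) \<Rightarrow> bool" where
  "svd_decomp N x s w v \<longleftrightarrow>
     (\<forall>j<CARD('d). \<forall>k<CARD('d). w j \<bullet> w k = (if j = k then 1 else 0)) \<and>
     (\<forall>j<CARD('d). 0 \<le> s j) \<and>
     (\<forall>j k. j \<le> k \<longrightarrow> k < CARD('d) \<longrightarrow> s k \<le> s j) \<and>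
     (\<forall>j<CARD('d). \<forall>k<CARD('d). 0 < s j \<longrightarrow> 0 < s k \<longrightarrow>
         (\<Sum>n<N. v j n * v k n) = (if j = k then 1 else 0)) \<and>
     (\<forall>n<N. x n = (\<Sum>j<CARD('d). (s j * v j n) *\<^sub>R w j))"

text \<open>U U^T beta, where U = [w_0,...,w_{M-1}].\<close>
definition proj_top :: "nat \<Rightarrow> (nat \<Rightarrow> real^'d) \<Rightarrow> real^'d \<Rightarrow> real^'d" where
  "proj_top M w \<beta> = (\<Sum>j<M. (w j \<bullet> \<beta>) *\<^sub>R w j)"

text \<open>|| Ubar^T beta ||_2 where Ubar = [w_M,...,w_{D-1}].\<close>
definition norm_Ubar_T :: "nat \<Rightarrow> (nat \<Rightarrow> real^'d) \<Rightarrow> real^'d \<Rightarrow> real" where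
  "norm_Ubar_T M w \<beta> = sqrt (\<Sum>j\<in>{M..<CARD('d)}. (w j \<bullet> \<beta>)\<^sup>2)"

definition norm2N :: "nat \<Rightarrow> (nat \<Rightarrow> real) \<Rightarrow> real" where
  "norm2N N z = sqrt (\<Sum>n<N. (z n)\<^sup>2)"

definition norminfN :: "nat \<Rightarrow> (nat \<Rightarrow> real) \<Rightarrow> real" where
  "norminfN N z = Max (insert 0 ((\<lambda>n. \<bar>z n\<bar>) ` {..<N}))"

definition between :: "real \<Rightarrow> real \<Rightarrow> real \<Rightarrow> bool" where
  "between a b c \<longleftrightarrow> min a b \<le> c \<and> c \<le> max a b"

end

theory Submission
  imports Defs
begin

lemma line_deriv:
  fixes p :: "real^'d \<Rightarrow> real" and L :: "real^'d \<Rightarrow> real^'d" and x :: "nat \<Rightarrow> real^'d"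
  assumes pd: "\<forall>\<beta>. (p has_derivative (\<lambda>k. g \<beta> \<bullet> k)) (at \<beta>)" and ppos: "\<And>\<beta>. p \<beta> > 0"
   and d1: "\<And>b a. (\<phi> b has_real_derivative \<phi>' b a) (at a)"
   and lin: "\<And>t. L (\<beta> + t *\<^sub>R h) = L \<beta> + t *\<^sub>R L h"
  shows "((\<lambda>t. -(ln (p (\<beta> + t *\<^sub>R h)) + (\<Sum>n<N. \<phi> (y n) (x n \<bullet> L (\<beta> + t *\<^sub>R h))))) has_real_derivative
      -((g (\<beta> + t *\<^sub>R h) \<bullet> h) / p (\<beta> + t *\<^sub>R h) + (\<Sum>n<N. \<phi>' (y n) (x n \<bullet> L (\<beta> + t *\<^sub>R h)) * (x n \<bullet> L h)))) (at t)"
proof -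
  have e: "\<And>t. x n \<bullet> L (\<beta> + t *\<^sub>R h) = x n \<bullet> L \<beta> + t * (x n \<bullet> L h)" for n
    by (simp add: lin inner_add_right)
  have l: "((\<lambda>t. \<beta> + t *\<^sub>R h) has_derivative (\<lambda>s. s *\<^sub>R h)) (at t)"
    by (auto intro!: derivative_eq_intros)
  have pc: "((\<lambda>t. p (\<beta> + t *\<^sub>R h)) has_real_derivative (g (\<beta> + t *\<^sub>R h) \<bullet> h)) (at t)"
    using has_derivative_compose[OF l pd[rule_format, of "\<beta> + t *\<^sub>R h"]]
    unfolding has_field_derivative_def
    by (simp add: o_def inner_scaleR_right mult.commute[of _ "g (\<beta> + t *\<^sub>R h) \<bullet> h"])
  have lnc: "((\<lambda>t. ln (p (\<beta> + t *\<^sub>R h))) has_real_derivative (g (\<beta> + t *\<^sub>R h) \<bullet> h) / p (\<beta> + t *\<^sub>R h)) (at t)"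
    using DERIV_chain2[OF DERIV_ln[OF ppos] pc] by (simp add: divide_inverse mult.commute)
  have phc: "((\<lambda>t. \<phi> (y n) (x n \<bullet> L \<beta> + t * (x n \<bullet> L h))) has_real_derivative
      \<phi>' (y n) (x n \<bullet> L \<beta> + t * (x n \<bullet> L h)) * (x n \<bullet> L h)) (at t)" for n
    by (rule DERIV_chain2[OF d1]) (auto intro!: derivative_eq_intros)
  have sc: "((\<lambda>t. \<Sum>n<N. \<phi> (y n) (x n \<bullet> L \<beta> + t * (x n \<bullet> L h))) has_real_derivative
      (\<Sum>n<N. \<phi>' (y n) (x n \<bullet> L \<beta> + t * (x n \<bullet> L h)) * (x n \<bullet> L h))) (at t)"
    by (rule DERIV_sum) (rule phc)
  show ?thesis unfolding e
    using DERIV_minus[OF DERIV_add[OF lnc sc]] by simp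
qed

lemma sc_line:
  fixes F :: "real^'d \<Rightarrow> real"
  assumes "strongly_convex \<alpha> F"
  shows "convex_on UNIV (\<lambda>t. F (b + t *\<^sub>R h) - \<alpha>/2 * (norm h)^2 * t^2)"
proof (rule convex_onI)
  fix t u v :: real assume t: "0<t" "t<1"
  let ?X = "b + v *\<^sub>R h" and ?Y = "b + u *\<^sub>R h"
  have 1: "F (t *\<^sub>R ?X + (1-t) *\<^sub>R ?Y) \<le> t*F ?X + (1-t)*F ?Y - \<alpha>/2*t*(1-t)*(norm(?X - ?Y))^2"
    using t by (intro assms[unfolded strongly_convex_def, rule_format]) auto
  have 2: "t *\<^sub>R ?X + (1-t) *\<^sub>R ?Y = b + ((1 - t) * u + t * v) *\<^sub>R h" by (simp add: algebra_simps)
  have "?X - ?Y = (v-u) *\<^sub>R h" by (simp add: algebra_simps)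
  then have 3: "(norm(?X-?Y))^2 = (v-u)^2 * (norm h)^2" by (simp add: power_mult_distrib)
  have id0: "((1 - t) * u + t * v)^2 = (1 - t) * u^2 + t * v^2 - t * (1 - t) * (v - u)^2"
    by algebra
  define K where "K = \<alpha> / 2 * (norm h)^2"
  define z where "z = (1 - t) * u + t * v"
  have zs: "(1 - t) *\<^sub>R u + t *\<^sub>R v = z" by (simp add: z_def)
  have h1: "F (b + z *\<^sub>R h) \<le> t * F ?X + (1 - t) * F ?Y - K * (t * (1 - t) * (v - u)^2)"
    using 1 unfolding 2 3 z_def K_def by (simp add: mult_ac)
  have 4: "K * z^2 = (1 - t) * (K * u^2) + t * (K * v^2) - K * (t * (1 - t) * (v - u)^2)"
    unfolding z_def id0 by (simp add: algebra_simps)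
  have 5: "(1 - t) * (F ?Y - K * u^2) + t * (F ?X - K * v^2) = (1 - t) * F ?Y + t * F ?X - ((1 - t) * (K * u^2) + t * (K * v^2))"
    by (simp add: algebra_simps)
  show "F (b + ((1 - t) *\<^sub>R u + t *\<^sub>R v) *\<^sub>R h) - \<alpha> / 2 * (norm h)\<^sup>2 * ((1 - t) *\<^sub>R u + t *\<^sub>R v)\<^sup>2
       \<le> (1 - t) * (F (b + u *\<^sub>R h) - \<alpha> / 2 * (norm h)\<^sup>2 * u\<^sup>2) + t * (F (b + v *\<^sub>R h) - \<alpha> / 2 * (norm h)\<^sup>2 * v\<^sup>2)"
    unfolding zs K_def[symmetric] using h1 4 5 by linarith
qed simp

lemma conv_deriv_mono:
  fixes g :: "real \<Rightarrow> real"
  assumes "convex_on UNIV g" "(g has_real_derivative a) (at 0)" "(g has_real_derivative b) (at 1)"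
  shows "a \<le> b"
proof -
  have "g 1 - g 0 \<ge> a * (1 - 0)"
    by (rule convex_on_imp_above_tangent[where A=UNIV]) (use assms in auto)
  moreover have "g 0 - g 1 \<ge> b * (0 - 1)"
    by (rule convex_on_imp_above_tangent[where A=UNIV]) (use assms in auto)
  ultimately show ?thesis by simp
qed

lemma gram:
  fixes v :: "nat \<Rightarrow> nat \<Rightarrow> real"
  assumes orth: "\<forall>j\<in>K. \<forall>k\<in>K. (\<Sum>n<N. v j n * v k n) = (if j=k then 1 else 0)" and fin: "finite K"
  shows "(\<Sum>n<N. (\<Sum>j\<in>K. a j * v j n)^2) = (\<Sum>j\<in>K. (a j)^2)"
proof -
  have "(\<Sum>n<N. (\<Sum>j\<in>K. a j * v j n)^2) = (\<Sum>n<N. \<Sum>j\<in>K. \<Sum>k\<in>K. a j * a k * (v j n * v k n))"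
    by (simp add: power2_eq_square sum_product mult_ac)
  also have "\<dots> = (\<Sum>j\<in>K. \<Sum>k\<in>K. \<Sum>n<N. a j * a k * (v j n * v k n))"
    by (subst sum.swap) (simp add: sum.swap[of _ "{..<N}"])
  also have "\<dots> = (\<Sum>j\<in>K. \<Sum>k\<in>K. a j * a k * (\<Sum>n<N. v j n * v k n))"
    by (simp add: sum_distrib_left)
  also have "\<dots> = (\<Sum>j\<in>K. \<Sum>k\<in>K. if j = k then a j * a k else 0)"
    by (intro sum.cong refl) (use orth in auto)
  also have "\<dots> = (\<Sum>j\<in>K. (a j)^2)"
    using fin by (simp add: power2_eq_square)
  finally show ?thesis .
qed

lemma bessel_v:
  fixes v :: "nat \<Rightarrow> nat \<Rightarrow> real"
  assumes orth: "\<forall>j\<in>K. \<forall>k\<in>K. (\<Sum>n<N. v j n * v k n) = (if j=k then 1 else 0)" and fin: "finite K"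
  shows "(\<Sum>j\<in>K. (\<Sum>n<N. c n * v j n)^2) \<le> (\<Sum>n<N. (c n)^2)"
proof -
  define a where "a j = (\<Sum>n<N. c n * v j n)" for j
  have cross: "(\<Sum>n<N. c n * (\<Sum>j\<in>K. a j * v j n)) = (\<Sum>j\<in>K. (a j)^2)"
  proof -
    have "(\<Sum>n<N. c n * (\<Sum>j\<in>K. a j * v j n)) = (\<Sum>n<N. \<Sum>j\<in>K. a j * (c n * v j n))"
      by (simp add: sum_distrib_left mult_ac)
    also have "\<dots> = (\<Sum>j\<in>K. \<Sum>n<N. a j * (c n * v j n))" by (rule sum.swap)
    also have "\<dots> = (\<Sum>j\<in>K. a j * a j)" by (simp add: sum_distrib_left[symmetric] a_def)
    finally show ?thesis by (simp add: power2_eq_square)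
  qed
  have "0 \<le> (\<Sum>n<N. (c n - (\<Sum>j\<in>K. a j * v j n))^2)" by (simp add: sum_nonneg)
  also have "\<dots> = (\<Sum>n<N. (c n)^2) - 2 * (\<Sum>n<N. c n * (\<Sum>j\<in>K. a j * v j n)) + (\<Sum>n<N. (\<Sum>j\<in>K. a j * v j n)^2)"
    by (simp add: power2_diff sum.distrib sum_subtractf sum_distrib_left mult_ac)
  also have "\<dots> = (\<Sum>n<N. (c n)^2) - (\<Sum>j\<in>K. (a j)^2)"
    using cross gram[OF orth fin] by simp
  finally show ?thesis by (simp add: a_def)
qed

lemma bessel_w:
  fixes w :: "nat \<Rightarrow> real^'d"
  assumes orth: "\<forall>j\<in>K. \<forall>k\<in>K. w j \<bullet> w k = (if j=k then 1 else 0)" and fin: "finite K"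
  shows "(\<Sum>j\<in>K. (w j \<bullet> h)^2) \<le> (norm h)^2"
proof -
  define q where "q = (\<Sum>j\<in>K. (w j \<bullet> h) *\<^sub>R w j)"
  have hq: "h \<bullet> q = (\<Sum>j\<in>K. (w j \<bullet> h)^2)"
    by (simp add: q_def inner_sum_right power2_eq_square inner_commute)
  have "q \<bullet> q = (\<Sum>j\<in>K. \<Sum>k\<in>K. (w j \<bullet> h) * ((w k \<bullet> h) * (w k \<bullet> w j)))"
    by (simp add: q_def inner_sum_left inner_sum_right sum_distrib_left mult_ac)
  also have "\<dots> = (\<Sum>j\<in>K. \<Sum>k\<in>K. if j = k then (w j \<bullet> h) * (w k \<bullet> h) else 0)"
    by (intro sum.cong refl) (use orth in auto)
  also have "\<dots> = (\<Sum>j\<in>K. (w j \<bullet> h)^2)" using fin by (simp add: power2_eq_square)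
  finally have qq: "q \<bullet> q = (\<Sum>j\<in>K. (w j \<bullet> h)^2)" .
  have "0 \<le> (h - q) \<bullet> (h - q)" by simp
  also have "\<dots> = h \<bullet> h - 2 * (h \<bullet> q) + q \<bullet> q" by (simp add: algebra_simps inner_commute)
  finally show ?thesis using hq qq by (simp add: power2_norm_eq_inner)
qed

lemma key_bound:
  fixes w :: "nat \<Rightarrow> real^'d" and v :: "nat \<Rightarrow> nat \<Rightarrow> real"
  assumes fin: "finite K"
    and orthw: "\<forall>j\<in>K. \<forall>k\<in>K. w j \<bullet> w k = (if j=k then 1 else 0)"
    and orthv: "\<forall>j\<in>K. \<forall>k\<in>K. (\<Sum>n<N. v j n * v k n) = (if j=k then 1 else 0)"
    and sb: "\<forall>j\<in>K. 0 \<le> s j \<and> s j \<le> S" and S: "0 \<le> S"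
  shows "(\<Sum>j\<in>K. s j * (w j \<bullet> h) * (\<Sum>n<N. z n * v j n)) \<le> S * norm2N N z * norm h"
proof -
  define a where "a j = w j \<bullet> h" for j
  define b where "b j = (\<Sum>n<N. z n * v j n)" for j
  have "(\<Sum>j\<in>K. s j * a j * b j) \<le> (\<Sum>j\<in>K. S * (\<bar>a j\<bar> * \<bar>b j\<bar>))"
  proof (rule sum_mono)
    fix j assume j: "j \<in> K"
    have "s j * a j * b j \<le> \<bar>s j * a j * b j\<bar>" by simp
    also have "\<dots> = s j * (\<bar>a j\<bar> * \<bar>b j\<bar>)" using sb j by (simp add: abs_mult)
    also have "\<dots> \<le> S * (\<bar>a j\<bar> * \<bar>b j\<bar>)" using sb j by (intro mult_right_mono) auto
    finally show "s j * a j * b j \<le> S * (\<bar>a j\<bar> * \<bar>b j\<bar>)" .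
  qed
  also have "\<dots> = S * (\<Sum>j\<in>K. \<bar>a j\<bar> * \<bar>b j\<bar>)" by (simp add: sum_distrib_left)
  finally have L: "(\<Sum>j\<in>K. s j * a j * b j) \<le> S * (\<Sum>j\<in>K. \<bar>a j\<bar> * \<bar>b j\<bar>)" .
  have CS: "(\<Sum>j\<in>K. \<bar>a j\<bar> * \<bar>b j\<bar>) \<le> sqrt (\<Sum>j\<in>K. (a j)^2) * sqrt (\<Sum>j\<in>K. (b j)^2)"
  proof -
    have "(\<Sum>j\<in>K. \<bar>a j\<bar> * \<bar>b j\<bar>)^2 \<le> (\<Sum>j\<in>K. (\<bar>a j\<bar>)^2) * (\<Sum>j\<in>K. (\<bar>b j\<bar>)^2)"
      by (rule Cauchy_Schwarz_ineq_sum)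
    then have "(\<Sum>j\<in>K. \<bar>a j\<bar> * \<bar>b j\<bar>)^2 \<le> (\<Sum>j\<in>K. (a j)^2) * (\<Sum>j\<in>K. (b j)^2)" by simp
    then have "sqrt ((\<Sum>j\<in>K. \<bar>a j\<bar> * \<bar>b j\<bar>)^2) \<le> sqrt ((\<Sum>j\<in>K. (a j)^2) * (\<Sum>j\<in>K. (b j)^2))"
      using real_sqrt_le_mono by blast
    moreover have "(\<Sum>j\<in>K. \<bar>a j\<bar> * \<bar>b j\<bar>) \<ge> 0" by (simp add: sum_nonneg)
    ultimately show ?thesis by (simp add: real_sqrt_mult)
  qed
  have A: "sqrt (\<Sum>j\<in>K. (a j)^2) \<le> norm h"
  proof -
    have "sqrt (\<Sum>j\<in>K. (a j)^2) \<le> sqrt ((norm h)^2)"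
      using bessel_w[OF orthw fin, of h] unfolding a_def by (rule real_sqrt_le_mono)
    then show ?thesis by simp
  qed
  have B: "sqrt (\<Sum>j\<in>K. (b j)^2) \<le> norm2N N z"
    using bessel_v[OF orthv fin, of z] unfolding b_def norm2N_def
    by (rule real_sqrt_le_mono)
  have "sqrt (\<Sum>j\<in>K. (a j)^2) * sqrt (\<Sum>j\<in>K. (b j)^2) \<le> norm h * norm2N N z"
    by (rule mult_mono[OF A B]) (auto simp: norm2N_def sum_nonneg)
  with CS have "(\<Sum>j\<in>K. \<bar>a j\<bar> * \<bar>b j\<bar>) \<le> norm h * norm2N N z" by linarith
  then have "S * (\<Sum>j\<in>K. \<bar>a j\<bar> * \<bar>b j\<bar>) \<le> S * (norm h * norm2N N z)"
    using S by (rule mult_left_mono)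
  with L show ?thesis by (simp add: a_def b_def mult_ac)
qed


lemma mvt_between:
  fixes f f' :: "real \<Rightarrow> real"
  assumes d: "\<And>t. (f has_real_derivative f' t) (at t)"
  shows "\<exists>c. between b a c \<and> f a - f b = f' c * (a - b)"
proof (cases a b rule: linorder_cases)
  case less
  obtain z where "a < z" "z < b" "f b - f a = (b - a) * f' z" using MVT2[OF less d] by blast
  then show ?thesis by (intro exI[of _ z]) (auto simp: between_def algebra_simps)
next
  case equal
  then show ?thesis by (intro exI[of _ a]) (auto simp: between_def)
next
  case greater
  obtain z where "b < z" "z < a" "f a - f b = (a - b) * f' z" using MVT2[OF greater d] by blast
  then show ?thesis by (intro exI[of _ z]) (auto simp: between_def algebra_simps)
qed

lemma sum_split_at:
  fixes M D :: nat
  shows   "M \<le> D \<Longrightarrow> (\<Sum>j<D. f j) = (\<Sum>j<M. f j) + (\<Sum>j\<in>{M..<D}. f j)"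
  using sum.atLeastLessThan_concat[of 0 M D f] by (simp add: atLeast0LessThan)

theorem mainTheorem10:
  fixes N M :: nat
    and x :: "nat \<Rightarrow> real^'d"
    and y :: "nat \<Rightarrow> 'y"
    and s :: "nat \<Rightarrow> real" and w :: "nat \<Rightarrow> real^'d" and v :: "nat \<Rightarrow> nat \<Rightarrow> real"
    and \<phi> \<phi>' \<phi>'' :: "'y \<Rightarrow> real \<Rightarrow> real"
    and p :: "real^'d \<Rightarrow> real"
    and \<alpha> :: real
    and \<mu>bar \<mu>hat :: "real^'d"
  assumes svd: "svd_decomp N x s w v"
    and M: "M \<le> CARD('d)"
    and d1: "\<And>b a. (\<phi> b has_real_derivative \<phi>' b a) (at a)"
    and d2: "\<And>b a. (\<phi>' b has_real_derivative \<phi>'' b a) (at a)"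
    and ppos: "\<And>\<beta>. p \<beta> > 0"
    and ptwice: "\<exists>g :: real^'d \<Rightarrow> real^'d.
                   (\<forall>\<beta>. (p has_derivative (\<lambda>h. g \<beta> \<bullet> h)) (at \<beta>)) \<and> (\<forall>\<beta>. g differentiable (at \<beta>))"
    and alpha: "\<alpha> > 0"
    and sconv: "strongly_convex \<alpha> (\<lambda>\<beta>. - (ln (p \<beta>) + (\<Sum>n<N. \<phi> (y n) (x n \<bullet> \<beta>))))"
    and mubar: "\<And>\<beta>. ln (p \<beta>) + (\<Sum>n<N. \<phi> (y n) (x n \<bullet> \<beta>))
                   \<le> ln (p \<mu>bar) + (\<Sum>n<N. \<phi> (y n) (x n \<bullet> \<mu>bar))"
    and muhat: "\<And>\<beta>. ln (p \<beta>) + (\<Sum>n<N. \<phi> (y n) (x n \<bullet> proj_top M w \<beta>))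
                   \<le> ln (p \<mu>hat) + (\<Sum>n<N. \<phi> (y n) (x n \<bullet> proj_top M w \<mu>hat))"
  shows "\<exists>A :: nat \<Rightarrow> real.
           (\<forall>n<N. between (x n \<bullet> proj_top M w \<mu>hat) (x n \<bullet> \<mu>hat) (A n)) \<and>
           norm (\<mu>hat - \<mu>bar)
             \<le> (if M < CARD('d) then s M else 0) *
                 (norm2N N (\<lambda>n. \<phi>' (y n) (x n \<bullet> \<mu>hat))
                  + s 0 * norm_Ubar_T M w \<mu>hat * norminfN N (\<lambda>n. \<phi>'' (y n) (A n))) / \<alpha>"
  proof -
  let ?D = "CARD('d)"
  have orthw: "\<forall>j<?D. \<forall>k<?D. w j \<bullet> w k = (if j = k then 1 else 0)"
    and spos: "\<forall>j<?D. 0 \<le> s j"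
    and sdec: "\<forall>j k. j \<le> k \<longrightarrow> k < ?D \<longrightarrow> s k \<le> s j"
    and orthv: "\<forall>j<?D. \<forall>k<?D. 0 < s j \<longrightarrow> 0 < s k \<longrightarrow> (\<Sum>n<N. v j n * v k n) = (if j = k then 1 else 0)"
    and xdef: "\<forall>n<N. x n = (\<Sum>j<?D. (s j * v j n) *\<^sub>R w j)"
    using svd unfolding svd_decomp_def by blast+
  obtain g where pd: "\<forall>\<beta>. (p has_derivative (\<lambda>h. g \<beta> \<bullet> h)) (at \<beta>)" using ptwice by blast
  define h where "h = \<mu>bar - \<mu>hat"
  define d where "d = norm (\<mu>hat - \<mu>bar)"
  have dh: "norm h = d" unfolding h_def d_def by (simp add: norm_minus_commute)
  define P where "P = proj_top M w"
  have linP: "P (a + t *\<^sub>R b) = P a + t *\<^sub>R P b" for a b and t :: real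
    unfolding P_def proj_top_def
    by (simp add: inner_add_right scaleR_add_left sum.distrib scaleR_sum_right)
  define F where "F \<beta> = - (ln (p \<beta>) + (\<Sum>n<N. \<phi> (y n) (x n \<bullet> \<beta>)))" for \<beta>
  define f where "f t = F (\<mu>hat + t *\<^sub>R h)" for t
  define k where "k t = - (ln (p (\<mu>hat + t *\<^sub>R h)) + (\<Sum>n<N. \<phi> (y n) (x n \<bullet> P (\<mu>hat + t *\<^sub>R h))))" for t
  define Df where "Df t = -((g (\<mu>hat + t *\<^sub>R h) \<bullet> h) / p (\<mu>hat + t *\<^sub>R h) + (\<Sum>n<N. \<phi>' (y n) (x n \<bullet> (\<mu>hat + t *\<^sub>R h)) * (x n \<bullet> h)))" for t
  define Dk where "Dk t = -((g (\<mu>hat + t *\<^sub>R h) \<bullet> h) / p (\<mu>hat + t *\<^sub>R h) + (\<Sum>n<N. \<phi>' (y n) (x n \<bullet> P (\<mu>hat + t *\<^sub>R h)) * (x n \<bullet> P h)))" for t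
  have fd: "(f has_real_derivative Df t) (at t)" for t
    using line_deriv[OF pd ppos d1, where L="\<lambda>b. b" and \<beta>=\<mu>hat and h=h and t=t and N=N and y=y and x=x]
    unfolding f_def F_def Df_def by simp
  have kd: "(k has_real_derivative Dk t) (at t)" for t
    using line_deriv[OF pd ppos d1, where L=P and \<beta>=\<mu>hat and h=h and t=t and N=N and y=y and x=x, OF linP]
    unfolding k_def Dk_def by simp
  have f1: "\<mu>hat + 1 *\<^sub>R h = \<mu>bar" by (simp add: h_def)
  have Df1: "Df 1 = 0"
  proof (rule DERIV_local_min[OF fd[of 1], of 1])
    show "\<forall>y. \<bar>1 - y\<bar> < 1 \<longrightarrow> f 1 \<le> f y"
    proof (intro allI impI)
      fix t :: real
      show "f 1 \<le> f t" unfolding f_def F_def f1 using mubar[of "\<mu>hat + t *\<^sub>R h"] by linarith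
    qed
  qed simp
  have Dk0: "Dk 0 = 0"
  proof (rule DERIV_local_min[OF kd[of 0], of 1])
    show "\<forall>y. \<bar>0 - y\<bar> < 1 \<longrightarrow> k 0 \<le> k y"
    proof (intro allI impI)
      fix t :: real
      show "k 0 \<le> k t" unfolding k_def P_def using muhat[of "\<mu>hat + t *\<^sub>R h"] by simp
    qed
  qed simp
  have conv: "convex_on UNIV (\<lambda>t. f t - \<alpha>/2 * (norm h)^2 * t^2)"
    unfolding f_def using sc_line[OF sconv[folded F_def]] .
  have gd: "((\<lambda>t. f t - \<alpha>/2 * (norm h)^2 * t^2) has_real_derivative Df t - \<alpha>/2 * (norm h)^2 * (2 * t)) (at t)" for t
  proof -
    have "((\<lambda>t. \<alpha>/2 * (norm h)^2 * t^2) has_real_derivative \<alpha>/2 * (norm h)^2 * (2 * t)) (at t)"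
      using DERIV_cmult[OF DERIV_pow[of 2 t], of "\<alpha>/2 * (norm h)^2"] by simp
    from DERIV_diff[OF fd this] show ?thesis .
  qed
  have "Df 0 - \<alpha>/2 * (norm h)^2 * (2 * 0) \<le> Df 1 - \<alpha>/2 * (norm h)^2 * (2 * 1)"
    by (rule conv_deriv_mono[OF conv gd gd])
  then have main0: "\<alpha> * d^2 \<le> Dk 0 - Df 0" using Df1 Dk0 dh by simp
  define a where "a n = x n \<bullet> \<mu>hat" for n
  define bb where "bb n = x n \<bullet> P \<mu>hat" for n
  have DD: "Dk 0 - Df 0 = (\<Sum>n<N. \<phi>' (y n) (a n) * (x n \<bullet> h)) - (\<Sum>n<N. \<phi>' (y n) (bb n) * (x n \<bullet> P h))"
    unfolding Dk_def Df_def a_def bb_def by simp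
  define J where "J = {M..<?D}"
  have xexp: "x n \<bullet> h' = (\<Sum>j<?D. s j * v j n * (w j \<bullet> h'))" if "n<N" for n h'
    using xdef that by (simp add: inner_sum_left mult_ac)
  have wP: "w j \<bullet> P h' = (if j < M then w j \<bullet> h' else 0)" if "j < ?D" for j h'
  proof -
    have "w j \<bullet> P h' = (\<Sum>k<M. (w k \<bullet> h') * (w j \<bullet> w k))"
      unfolding P_def proj_top_def by (simp add: inner_sum_right)
    also have "\<dots> = (\<Sum>k<M. if k = j then w k \<bullet> h' else 0)"
      by (intro sum.cong refl) (use orthw that M in auto)
    also have "\<dots> = (if j < M then w j \<bullet> h' else 0)" by (simp add: sum.delta)
    finally show ?thesis .
  qed
  have xPexp: "x n \<bullet> P h' = (\<Sum>j<M. s j * v j n * (w j \<bullet> h'))" if "n<N" for n h'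
  proof -
    have "x n \<bullet> P h' = (\<Sum>j<?D. s j * v j n * (w j \<bullet> P h'))" by (rule xexp[OF that])
    also have "\<dots> = (\<Sum>j<?D. if j < M then s j * v j n * (w j \<bullet> h') else 0)"
      by (intro sum.cong refl) (simp add: wP)
    also have "\<dots> = (\<Sum>j<M. if j < M then s j * v j n * (w j \<bullet> h') else 0) + (\<Sum>j\<in>{M..<?D}. if j < M then s j * v j n * (w j \<bullet> h') else 0)"
      by (rule sum_split_at[OF M])
    also have "\<dots> = (\<Sum>j<M. s j * v j n * (w j \<bullet> h'))" by simp
    finally show ?thesis .
  qed
  have xQexp: "x n \<bullet> h' - x n \<bullet> P h' = (\<Sum>j\<in>J. s j * v j n * (w j \<bullet> h'))" if "n<N" for n h'
  proof -
    have "x n \<bullet> h' - x n \<bullet> P h' = (\<Sum>j<?D. s j * v j n * (w j \<bullet> h')) - (\<Sum>j<M. s j * v j n * (w j \<bullet> h'))"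
      by (simp only: xexp[OF that, of h'] xPexp[OF that, of h'])
    also have "\<dots> = (\<Sum>j\<in>{M..<?D}. s j * v j n * (w j \<bullet> h'))"
      using sum_split_at[OF M, of "\<lambda>j. s j * v j n * (w j \<bullet> h')"] by simp
    finally show ?thesis unfolding J_def .
  qed
  define r where "r n = a n - bb n" for n
  have rexp: "r n = (\<Sum>j\<in>J. s j * v j n * (w j \<bullet> \<mu>hat))" if "n<N" for n
    using xQexp[OF that] unfolding r_def a_def bb_def by simp
  have "\<forall>n. \<exists>c. between (bb n) (a n) c \<and> \<phi>' (y n) (a n) - \<phi>' (y n) (bb n) = \<phi>'' (y n) c * (a n - bb n)"
    using mvt_between[OF d2] by blast
  then obtain A where A: "\<And>n. between (bb n) (a n) (A n) \<and> \<phi>' (y n) (a n) - \<phi>' (y n) (bb n) = \<phi>'' (y n) (A n) * r n"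
    unfolding r_def by metis
  define c where "c n = \<phi>' (y n) (a n)" for n
  define e where "e n = \<phi>'' (y n) (A n) * r n" for n
  have eE: "e n = c n - \<phi>' (y n) (bb n)" for n using A[of n] unfolding e_def c_def by simp
  define T1 where "T1 = (\<Sum>n<N. c n * (x n \<bullet> h - x n \<bullet> P h))"
  define T2 where "T2 = (\<Sum>n<N. e n * (x n \<bullet> P h))"
  have split: "Dk 0 - Df 0 = T1 + T2"
  proof -
    have "T1 + T2 = (\<Sum>n<N. c n * (x n \<bullet> h - x n \<bullet> P h) + e n * (x n \<bullet> P h))"
      unfolding T1_def T2_def by (simp add: sum.distrib)
    also have "\<dots> = (\<Sum>n<N. c n * (x n \<bullet> h) - \<phi>' (y n) (bb n) * (x n \<bullet> P h))"
      by (intro sum.cong refl) (simp add: eE algebra_simps)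
    also have "\<dots> = Dk 0 - Df 0" unfolding DD by (simp add: sum_subtractf c_def)
    finally show ?thesis by simp
  qed
  define Sbar where "Sbar = (if M < ?D then s M else 0)"
  have D0: "0 < ?D" by simp
  have s0: "0 \<le> s 0" using spos D0 by blast
  have Sbar0: "0 \<le> Sbar" unfolding Sbar_def using spos by auto
  define K1 where "K1 = {j\<in>J. 0 < s j}"
  define K2 where "K2 = {j\<in>{..<M}. 0 < s j}"
  have K1D: "K1 \<subseteq> {..<?D}" unfolding K1_def J_def by auto
  have K2D: "K2 \<subseteq> {..<?D}" unfolding K2_def using M by auto
  have finJ: "finite J" unfolding J_def by simp
  have fK1: "finite K1" unfolding K1_def J_def by simp
  have fK2: "finite K2" unfolding K2_def by simp
  have ow1: "\<forall>j\<in>K1. \<forall>k\<in>K1. w j \<bullet> w k = (if j=k then 1 else 0)" using orthw K1D by blast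
  have ov1: "\<forall>j\<in>K1. \<forall>k\<in>K1. (\<Sum>n<N. v j n * v k n) = (if j=k then 1 else 0)"
    using orthv K1D unfolding K1_def by blast
  have ow2: "\<forall>j\<in>K2. \<forall>k\<in>K2. w j \<bullet> w k = (if j=k then 1 else 0)" using orthw K2D by blast
  have ov2: "\<forall>j\<in>K2. \<forall>k\<in>K2. (\<Sum>n<N. v j n * v k n) = (if j=k then 1 else 0)"
    using orthv K2D unfolding K2_def by blast
  have sb1: "\<forall>j\<in>K1. 0 \<le> s j \<and> s j \<le> Sbar"
    unfolding K1_def J_def Sbar_def using sdec by auto
  have sb2: "\<forall>j\<in>K2. 0 \<le> s j \<and> s j \<le> s 0"
    using sdec K2D unfolding K2_def by auto
  have J0: "\<forall>j\<in>J - K1. s j = 0" unfolding K1_def J_def using spos by force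
  have M0: "\<forall>j\<in>{..<M} - K2. s j = 0"
  proof
    fix j assume j: "j \<in> {..<M} - K2"
    then have "j < ?D" "\<not> 0 < s j" using M unfolding K2_def by auto
    then show "s j = 0" using spos by force
  qed
  have T1eq: "T1 = (\<Sum>j\<in>K1. s j * (w j \<bullet> h) * (\<Sum>n<N. c n * v j n))"
  proof -
    have "T1 = (\<Sum>n<N. \<Sum>j\<in>J. c n * (s j * v j n * (w j \<bullet> h)))"
      unfolding T1_def by (intro sum.cong refl) (simp add: xQexp sum_distrib_left)
    also have "\<dots> = (\<Sum>j\<in>J. \<Sum>n<N. c n * (s j * v j n * (w j \<bullet> h)))" by (rule sum.swap)
    also have "\<dots> = (\<Sum>j\<in>J. s j * (w j \<bullet> h) * (\<Sum>n<N. c n * v j n))"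
      by (simp add: sum_distrib_left mult_ac)
    also have "\<dots> = (\<Sum>j\<in>K1. s j * (w j \<bullet> h) * (\<Sum>n<N. c n * v j n))"
    proof (rule sum.mono_neutral_right[OF finJ])
      show "K1 \<subseteq> J" unfolding K1_def by auto
      show "\<forall>j\<in>J - K1. s j * (w j \<bullet> h) * (\<Sum>n<N. c n * v j n) = 0" using J0 by simp
    qed
    finally show ?thesis .
  qed
  have T2eq: "T2 = (\<Sum>j\<in>K2. s j * (w j \<bullet> h) * (\<Sum>n<N. e n * v j n))"
  proof -
    have "T2 = (\<Sum>n<N. \<Sum>j<M. e n * (s j * v j n * (w j \<bullet> h)))"
      unfolding T2_def by (intro sum.cong refl) (simp add: xPexp sum_distrib_left)
    also have "\<dots> = (\<Sum>j<M. \<Sum>n<N. e n * (s j * v j n * (w j \<bullet> h)))" by (rule sum.swap)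
    also have "\<dots> = (\<Sum>j<M. s j * (w j \<bullet> h) * (\<Sum>n<N. e n * v j n))"
      by (simp add: sum_distrib_left mult_ac)
    also have "\<dots> = (\<Sum>j\<in>K2. s j * (w j \<bullet> h) * (\<Sum>n<N. e n * v j n))"
    proof (rule sum.mono_neutral_right)
      show "finite {..<M}" by simp
      show "K2 \<subseteq> {..<M}" unfolding K2_def by auto
      show "\<forall>j\<in>{..<M} - K2. s j * (w j \<bullet> h) * (\<Sum>n<N. e n * v j n) = 0" using M0 by simp
    qed
    finally show ?thesis .
  qed
  have B1: "T1 \<le> Sbar * norm2N N c * d"
    unfolding T1eq dh[symmetric] by (rule key_bound[OF fK1 ow1 ov1 sb1 Sbar0])
  have B2: "T2 \<le> s 0 * norm2N N e * d"
    unfolding T2eq dh[symmetric] by (rule key_bound[OF fK2 ow2 ov2 sb2 s0])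
  define m where "m = norminfN N (\<lambda>n. \<phi>'' (y n) (A n))"
  have mge: "\<bar>\<phi>'' (y n) (A n)\<bar> \<le> m" if "n < N" for n
    unfolding m_def norminfN_def using that by (intro Max_ge) auto
  have m0: "0 \<le> m" unfolding m_def norminfN_def by (intro Max_ge) auto
  have Be: "norm2N N e \<le> m * norm2N N r"
  proof -
    have "(\<Sum>n<N. (e n)^2) \<le> (\<Sum>n<N. m^2 * (r n)^2)"
    proof (rule sum_mono)
      fix n assume "n \<in> {..<N}"
      then have "(\<phi>'' (y n) (A n))^2 \<le> m^2" using mge m0 abs_le_square_iff by fastforce
      then show "(e n)^2 \<le> m^2 * (r n)^2" unfolding e_def
        by (simp add: power_mult_distrib mult_right_mono)
    qed
    also have "\<dots> = m^2 * (\<Sum>n<N. (r n)^2)" by (simp add: sum_distrib_left)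
    finally have "sqrt (\<Sum>n<N. (e n)^2) \<le> sqrt (m^2 * (\<Sum>n<N. (r n)^2))" by (rule real_sqrt_le_mono)
    then show ?thesis unfolding norm2N_def using m0 by (simp add: real_sqrt_mult)
  qed
  define U where "U = norm_Ubar_T M w \<mu>hat"
  have Br: "norm2N N r \<le> Sbar * U"
  proof -
    have "(\<Sum>n<N. (r n)^2) = (\<Sum>n<N. (\<Sum>j\<in>K1. (s j * (w j \<bullet> \<mu>hat)) * v j n)^2)"
    proof (intro sum.cong refl)
      fix n assume n: "n \<in> {..<N}"
      have "r n = (\<Sum>j\<in>J. (s j * (w j \<bullet> \<mu>hat)) * v j n)" using rexp n by (simp add: mult_ac)
      also have "\<dots> = (\<Sum>j\<in>K1. (s j * (w j \<bullet> \<mu>hat)) * v j n)"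
      proof (rule sum.mono_neutral_right[OF finJ])
        show "K1 \<subseteq> J" unfolding K1_def by auto
        show "\<forall>j\<in>J - K1. (s j * (w j \<bullet> \<mu>hat)) * v j n = 0" using J0 by simp
      qed
      finally show "(r n)^2 = (\<Sum>j\<in>K1. (s j * (w j \<bullet> \<mu>hat)) * v j n)^2" by simp
    qed
    also have "\<dots> = (\<Sum>j\<in>K1. (s j * (w j \<bullet> \<mu>hat))^2)" by (rule gram[OF ov1 fK1])
    also have "\<dots> \<le> (\<Sum>j\<in>K1. Sbar^2 * (w j \<bullet> \<mu>hat)^2)"
    proof (rule sum_mono)
      fix j assume "j \<in> K1"
      then have "(s j)^2 \<le> Sbar^2" using sb1 by (simp add: power_mono)
      then show "(s j * (w j \<bullet> \<mu>hat))^2 \<le> Sbar^2 * (w j \<bullet> \<mu>hat)^2"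
        by (simp add: power_mult_distrib mult_right_mono)
    qed
    also have "\<dots> = Sbar^2 * (\<Sum>j\<in>K1. (w j \<bullet> \<mu>hat)^2)" by (simp add: sum_distrib_left)
    also have "\<dots> \<le> Sbar^2 * (\<Sum>j\<in>J. (w j \<bullet> \<mu>hat)^2)"
      by (intro mult_left_mono sum_mono2 finJ) (auto simp: K1_def)
    finally have "sqrt (\<Sum>n<N. (r n)^2) \<le> sqrt (Sbar^2 * (\<Sum>j\<in>J. (w j \<bullet> \<mu>hat)^2))"
      by (rule real_sqrt_le_mono)
    then show ?thesis unfolding norm2N_def U_def norm_Ubar_T_def J_def
      using Sbar0 by (simp add: real_sqrt_mult)
  qed
  have nc0: "0 \<le> norm2N N c" unfolding norm2N_def by (simp add: sum_nonneg)
  have U0: "0 \<le> U" unfolding U_def norm_Ubar_T_def by (simp add: sum_nonneg)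
  have d0: "0 \<le> d" unfolding d_def by simp
  define R where "R = Sbar * (norm2N N c + s 0 * U * m)"
  have R0: "0 \<le> R" unfolding R_def using Sbar0 nc0 U0 m0 s0 by simp
  have "s 0 * norm2N N e * d \<le> s 0 * (m * (Sbar * U)) * d"
  proof -
    have "norm2N N e \<le> m * (Sbar * U)" using Be Br m0 by (meson mult_left_mono order_trans)
    then show ?thesis using s0 d0 by (simp add: mult_left_mono mult_right_mono)
  qed
  then have "\<alpha> * d^2 \<le> R * d"
    using main0 split B1 B2 unfolding R_def by (simp add: algebra_simps)
  then have dR: "d \<le> R / \<alpha>"
  proof (cases "d = 0")
    case True then show ?thesis using R0 alpha by simp
  next
    case False
    with d0 have "0 < d" by simp
    with \<open>\<alpha> * d^2 \<le> R * d\<close> have "\<alpha> * d \<le> R" by (simp add: power2_eq_square)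
    then show ?thesis using alpha by (simp add: pos_le_divide_eq mult.commute)
  qed
  show ?thesis
  proof (intro exI[of _ A] conjI allI impI)
    fix n assume "n < N"
    show "between (x n \<bullet> proj_top M w \<mu>hat) (x n \<bullet> \<mu>hat) (A n)"
      using A[of n] unfolding bb_def a_def P_def by simp
  next
    show "norm (\<mu>hat - \<mu>bar) \<le> (if M < ?D then s M else 0) *
                 (norm2N N (\<lambda>n. \<phi>' (y n) (x n \<bullet> \<mu>hat))
                  + s 0 * norm_Ubar_T M w \<mu>hat * norminfN N (\<lambda>n. \<phi>'' (y n) (A n))) / \<alpha>"
      using dR unfolding d_def R_def Sbar_def U_def m_def c_def a_def by simp
  qed
qed

end
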